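(* Let $(\mathbf{L},\mathbf{R})\in\mathcal{P}_{\mathsf N}$ be superbalanced and suppose it admits a contraction map. Then for all $i,j\in[\mathsf N+1]$, the null reduction on $i$ of the purification on $j$ of $(\mathbf{L},\mathbf{R})$ admits a contraction map (or is empty).
   Context: $\mathcal{P}_{\mathsf N}$ denotes the set of pairs $(\mathbf{L},\mathbf{R})$ of $(0,1)$-matrices, $\mathbf{L}$ of size $(\mathsf N+1)\times m_L$ and $\mathbf{R}$ of size $(\mathsf N+1)\times m_R$, such that some index $p\in[\mathsf N+1]$ has row $p$ of $\mathbf{L}$ and row $p$ of $\mathbf{R}$ both zero. $\mathbf{A}_{(i)}$ denotes the $i$-th row of $\mathbf{A}$; $e$ is the all-ones row vector; $|x-x'|$ is the Hamming distance of bit strings. A contraction map for $(\mathbf{L},\mathbf{R})$ is a map $f:\{0,1\}^{m_L}\to\{0,1\}^{m_R}$ with $f(\mathbf{L}_{(i)})=\mathbf{R}_{(i)}$ for all $i$ and $|x-x'|\ge|f(x)-f(x')|$ for all $x,x'$. The pair is superbalanced if $\mathbf{L}_{(i)}\cdot\mathbf{L}_{(j)}=\mathbf{R}_{(i)}\cdot\mathbf{R}_{(j)}$ for all $i,j$. The purification on $j$ of $(\mathbf{L},\mathbf{R})$ is the pair $(\mathbf{L}+_2 e^T\mathbf{L}_{(j)},\ \mathbf{R}+_2 e^T\mathbf{R}_{(j)})$, where $+_2$ is entrywise addition mod 2; i.e. every column of $\mathbf{L}$ (resp. $\mathbf{R}$) with a $1$ in row $j$ is bit-flipped entirely, and other columns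 are unchanged (row $j$ becomes zero in both). The null reduction on $i$ of a pair keeps exactly the columns of each matrix that have a $1$ in row $i$. *)

theory Defs
  imports Main
begin

text \<open>A (0,1)-matrix with N+1 rows (indexed 0..N) and m columns is represented
  as the list of its m columns, each column a bool list of length N+1
  (True = 1).\<close>

type_synonym bmat = "bool list list"

definition wf_mat :: "nat \<Rightarrow> bmat \<Rightarrow> bool" where
  "wf_mat n A \<longleftrightarrow> (\<forall>c\<in>set A. length c = n)"

definition ncols :: "bmat \<Rightarrow> nat" where
  "ncols A = length A"

definition row :: "bmat \<Rightarrow> nat \<Rightarrow> bool list" where
  "row A i = map (\<lambda>c. c ! i) A"

definition hamming :: "bool list \<Rightarrow> bool list \<Rightarrow> nat" where
  "hamming x y = card {k. k < length x \<and> x ! k \<noteq> y ! k}"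

definition dot :: "bool list \<Rightarrow> bool list \<Rightarrow> nat" where
  "dot x y = card {k. k < length x \<and> x ! k \<and> y ! k}"

definition in_P :: "nat \<Rightarrow> bmat \<Rightarrow> bmat \<Rightarrow> bool" where
  "in_P N L R \<longleftrightarrow> wf_mat (N+1) L \<and> wf_mat (N+1) R \<and>
     (\<exists>p < N+1. (\<forall>c\<in>set L. \<not> c ! p) \<and> (\<forall>c\<in>set R. \<not> c ! p))"

definition superbalanced :: "nat \<Rightarrow> bmat \<Rightarrow> bmat \<Rightarrow> bool" where
  "superbalanced N L R \<longleftrightarrow>
     (\<forall>i < N+1. \<forall>j < N+1. dot (row L i) (row L j) = dot (row R i) (row R j))"

definition contraction_map :: "nat \<Rightarrow> bmat \<Rightarrow> bmat \<Rightarrow> (bool list \<Rightarrow> bool list) \<Rightarrow> bool" where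
  "contraction_map N L R f \<longleftrightarrow>
     (\<forall>x. length x = ncols L \<longrightarrow> length (f x) = ncols R) \<and>
     (\<forall>i < N+1. f (row L i) = row R i) \<and>
     (\<forall>x x'. length x = ncols L \<longrightarrow> length x' = ncols L \<longrightarrow>
        hamming (f x) (f x') \<le> hamming x x')"

definition admits_contraction :: "nat \<Rightarrow> bmat \<Rightarrow> bmat \<Rightarrow> bool" where
  "admits_contraction N L R \<longleftrightarrow> (\<exists>f. contraction_map N L R f)"

definition purify :: "nat \<Rightarrow> bmat \<Rightarrow> bmat" where
  "purify j A = map (\<lambda>c. if c ! j then map Not c else c) A"

definition null_reduce :: "nat \<Rightarrow> bmat \<Rightarrow> bmat" where
  "null_reduce i A = filter (\<lambda>c. c ! i) A"

end

theory Submission imports Defs begin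

lemma card_less_Suc_split:
  "card {k. k < Suc n \<and> P k} = (if P 0 then 1 else 0) + card {k. k < n \<and> P (Suc k)}"
proof -
  have e: "{k. k < Suc n \<and> P k} = (if P 0 then {0} else {}) \<union> Suc ` {k. k < n \<and> P (Suc k)}"
    by (auto simp: less_Suc_eq_0_disj)
  have "card (Suc ` {k. k < n \<and> P (Suc k)}) = card {k. k < n \<and> P (Suc k)}"
    by (simp add: card_image)
  then show ?thesis unfolding e by (auto simp: card_insert_if)
qed

lemma hamming_Nil[simp]: "hamming [] y = 0" by (simp add: hamming_def)
lemma hamming_Cons[simp]: "hamming (a#x) (b#y) = (if a = b then 0 else 1) + hamming x y"
  unfolding hamming_def by (simp add: card_less_Suc_split)
lemma dot_Nil[simp]: "dot [] y = 0" by (simp add: dot_def)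
lemma dot_Cons[simp]: "dot (a#x) (b#y) = (if a \<and> b then 1 else 0) + dot x y"
  unfolding dot_def by (simp add: card_less_Suc_split)

definition bxor :: "bool list \<Rightarrow> bool list \<Rightarrow> bool list" where
  "bxor x y = map2 (\<noteq>) x y"
definition conj :: "bool list \<Rightarrow> bool list \<Rightarrow> bool list" where
  "conj x y = map2 (\<and>) x y"
definition compress :: "bool list \<Rightarrow> bool list \<Rightarrow> bool list" where
  "compress m x = map snd (filter fst (zip m x))"
fun ext :: "bool list \<Rightarrow> bool list \<Rightarrow> bool list" where
  "ext [] ys = []"
| "ext (False # ms) ys = False # ext ms ys"
| "ext (True # ms) [] = False # ext ms []"
| "ext (True # ms) (y # ys) = y # ext ms ys"

lemma xor_Cons[simp]: "bxor (a#x) (b#y) = (a \<noteq> b) # bxor x y" by (simp add: bxor_def)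
lemma conj_Cons[simp]: "conj (a#x) (b#y) = (a \<and> b) # conj x y" by (simp add: conj_def)
lemma xor_Nil[simp]: "bxor [] y = []" by (simp add: bxor_def)
lemma conj_Nil[simp]: "conj [] y = []" by (simp add: conj_def)
lemma compress_Nil[simp]: "compress [] y = []" by (simp add: compress_def)
lemma compress_Cons[simp]: "compress (a#m) (b#y) = (if a then b # compress m y else compress m y)"
  by (simp add: compress_def)
lemma length_xor[simp]: "length (bxor x y) = min (length x) (length y)" by (simp add: bxor_def)
lemma length_conj[simp]: "length (conj x y) = min (length x) (length y)" by (simp add: conj_def)

lemma ham_sym: "length x = length y \<Longrightarrow> hamming x y = hamming y x"
  by (induct x y rule: list_induct2) auto
lemma dot_sym: "length x = length y \<Longrightarrow> dot x y = dot y x"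
  by (induct x y rule: list_induct2) auto
lemma ham_triangle: "length x = length y \<Longrightarrow> length y = length z \<Longrightarrow> hamming x z \<le> hamming x y + hamming y z"
proof (induct x y arbitrary: z rule: list_induct2)
  case Nil then show ?case by simp
next
  case (Cons a x b y z)
  then obtain c z' where z: "z = c # z'" "length y = length z'" by (cases z) auto
  have "hamming x z' \<le> hamming x y + hamming y z'" using Cons z by blast
  then show ?case using z by auto
qed
lemma ham_xor: "length x = length y \<Longrightarrow> length y = length a \<Longrightarrow> hamming (bxor x a) (bxor y a) = hamming x y"
proof (induct x y arbitrary: a rule: list_induct2)
  case Nil then show ?case by simp
next
  case (Cons a0 x0 b0 y0 zz)
  then obtain c0 z0 where z: "zz = c0 # z0" "length y0 = length z0 \<or> length x0 = length z0" by (cases zz) auto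
  with Cons have "length y0 = length z0 \<and> length x0 = length z0" by auto
  with Cons.hyps(2)[of z0] Cons.prems z show ?case by auto
qed
lemma xor_xor: "length x = length a \<Longrightarrow> bxor (bxor x a) a = x"
  by (induct x a rule: list_induct2) auto
lemma xor_self: "bxor x x = replicate (length x) False"
  by (induct x) auto
lemma ham_dot: "length x = length y \<Longrightarrow> hamming x y + 2 * dot x y = dot x x + dot y y"
  by (induct x y rule: list_induct2) auto
lemma dot_xor: "length x = length y \<Longrightarrow> length y = length z \<Longrightarrow>
   2 * dot (bxor x z) (bxor y z) + hamming x y = hamming x z + hamming y z"
proof (induct x y arbitrary: z rule: list_induct2)
  case Nil then show ?case by simp
next
  case (Cons a0 x0 b0 y0 zz)
  then obtain c0 z0 where z: "zz = c0 # z0" "length y0 = length z0 \<or> length x0 = length z0" by (cases zz) auto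
  with Cons have "length y0 = length z0 \<and> length x0 = length z0" by auto
  with Cons.hyps(2)[of z0] Cons.prems z show ?case by auto
qed
lemma ham_zero: "hamming x (replicate (length x) False) = dot x x"
  by (induct x) auto
lemma dot_conj: "length a = length b \<Longrightarrow> dot (conj a b) (conj a b) = dot a b"
  by (induct a b rule: list_induct2) auto
lemma ham_conj1: "length a = length b \<Longrightarrow> hamming (conj a b) a + dot a b = dot a a"
  by (induct a b rule: list_induct2) auto
lemma ham_conj2: "length a = length b \<Longrightarrow> hamming (conj a b) b + dot a b = dot b b"
  by (induct a b rule: list_induct2) auto
lemma median_ge: "length y = length A \<Longrightarrow> length A = length B \<Longrightarrow>
   hamming A B + dot A B \<le> hamming y A + hamming y B + dot y y"
proof (induct y A arbitrary: B rule: list_induct2)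
  case Nil then show ?case by simp
next
  case (Cons a0 x0 b0 y0 zz)
  then obtain c0 z0 where z: "zz = c0 # z0" "length y0 = length z0 \<or> length x0 = length z0" by (cases zz) auto
  with Cons have "length y0 = length z0 \<and> length x0 = length z0" by auto
  with Cons.hyps(2)[of z0] Cons.prems z show ?case by auto
qed
lemma median_eq: "length y = length A \<Longrightarrow> length A = length B \<Longrightarrow>
   hamming y A + hamming y B + dot y y \<le> hamming A B + dot A B \<Longrightarrow> y = conj A B"
proof (induct y A arbitrary: B rule: list_induct2)
  case Nil then show ?case by simp
next
  case (Cons y0 y a A)
  then obtain b B' where B: "B = b # B'" "length B' = length A" by (cases B) auto
  have "hamming A B' + dot A B' \<le> hamming y A + hamming y B' + dot y y"
    using median_ge[OF Cons.hyps(1) B(2)[symmetric]] .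
  with Cons.prems B show ?case using Cons.hyps(2)[of B'] by (auto split: if_splits)
qed

lemma length_ext[simp]: "length (ext m y) = length m"
  by (induct m y rule: ext.induct) auto
lemma length_compress: "length m = length x \<Longrightarrow> length (compress m x) = length (filter id m)"
  by (induct m x rule: list_induct2) auto
lemma compress_ext: "length y = length (filter id m) \<Longrightarrow> compress m (ext m y) = y"
  by (induct m y rule: ext.induct) auto
lemma ham_ext: "length y = length (filter id m) \<Longrightarrow> length y' = length (filter id m) \<Longrightarrow>
   hamming (ext m y) (ext m y') \<le> hamming y y'"
proof (induct m arbitrary: y y')
  case Nil then show ?case by simp
next
  case (Cons a m)
  show ?case
  proof (cases a)
    case False
    then show ?thesis using Cons.hyps[of y y'] Cons.prems by simp
  next
    case True
    then obtain b ys b' ys' where yy: "y = b # ys" "y' = b' # ys'"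
      using Cons.prems by (cases y; cases y') auto
    have "hamming (ext m ys) (ext m ys') \<le> hamming ys ys'"
      using Cons.hyps[of ys ys'] Cons.prems yy True by simp
    then show ?thesis using yy True by simp
  qed
qed
lemma ham_compress: "length m = length x \<Longrightarrow> length x = length x' \<Longrightarrow>
   hamming (compress m x) (compress m x') \<le> hamming x x'"
proof (induct m x arbitrary: x' rule: list_induct2)
  case Nil then show ?case by simp
next
  case (Cons a0 x0 b0 y0 zz)
  then obtain c0 z0 where z: "zz = c0 # z0" "length y0 = length z0 \<or> length x0 = length z0" by (cases zz) auto
  with Cons have "length y0 = length z0 \<and> length x0 = length z0" by auto
  with Cons.hyps(2)[of z0] Cons.prems z show ?case by auto
qed
lemma ext_compress: "length x = length m \<Longrightarrow> ext m (compress m x) = conj x m"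
  by (induct x m rule: list_induct2) auto
lemma compress_conj: "length x = length m \<Longrightarrow> compress m (conj x m) = compress m x"
  by (induct x m rule: list_induct2) auto


lemma length_row[simp]: "length (row A k) = length A" by (simp add: row_def)
lemma ncols_purify[simp]: "ncols (purify j A) = ncols A" by (simp add: ncols_def purify_def)
lemma length_purify[simp]: "length (purify j A) = length A" by (simp add: purify_def)

lemma map2_map_same: "map2 f (map g A) (map h A) = map (\<lambda>c. f (g c) (h c)) A"
  by (induct A) auto

lemma row_purify: "wf_mat n A \<Longrightarrow> k < n \<Longrightarrow> j < n \<Longrightarrow>
   row (purify j A) k = bxor (row A k) (row A j)"
proof -
  assume wf: "wf_mat n A" and kn: "k < n" and jn: "j < n"
  have "row (purify j A) k = map (\<lambda>c. (if c ! j then map Not c else c) ! k) A"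
    by (simp add: row_def purify_def)
  also have "\<dots> = map (\<lambda>c. c ! k \<noteq> c ! j) A"
  proof (rule map_cong[OF refl])
    fix c assume "c \<in> set A"
    then have "length c = n" using wf by (simp add: wf_mat_def)
    then show "(if c ! j then map Not c else c) ! k = (c ! k \<noteq> c ! j)"
      using kn by (cases "c ! j") simp_all
  qed
  also have "\<dots> = bxor (row A k) (row A j)"
    by (simp add: bxor_def row_def map2_map_same)
  finally show ?thesis .
qed

lemma wf_purify: "wf_mat n A \<Longrightarrow> wf_mat n (purify j A)"
  by (auto simp: wf_mat_def purify_def)

lemma row_purify_self: "wf_mat n A \<Longrightarrow> j < n \<Longrightarrow> row (purify j A) j = replicate (length A) False"
  by (simp add: row_purify xor_self)

lemma row_null: "row (null_reduce i A) k = compress (row A i) (row A k)"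
  unfolding row_def null_reduce_def compress_def
  by (induct A) auto

lemma ncols_null: "ncols (null_reduce i A) = length (filter id (row A i))"
  by (induct A) (auto simp: ncols_def null_reduce_def row_def)


lemma purify_contr:
  assumes c: "contraction_map N L R f" and wL: "wf_mat (N+1) L" and wR: "wf_mat (N+1) R"
    and j: "j < N+1"
  shows "contraction_map N (purify j L) (purify j R) (\<lambda>x. bxor (f (bxor x (row L j))) (row R j))"
proof -
  have len: "\<And>x. length x = ncols L \<Longrightarrow> length (f x) = ncols R"
    and rows: "\<And>i. i < N+1 \<Longrightarrow> f (row L i) = row R i"
    and ham: "\<And>x x'. length x = ncols L \<Longrightarrow> length x' = ncols L \<Longrightarrow>
        hamming (f x) (f x') \<le> hamming x x'"
    using c unfolding contraction_map_def by blast+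
  have lx: "length (bxor x (row L j)) = ncols L" if "length x = ncols L" for x
    using that by (simp add: ncols_def)
  show ?thesis unfolding contraction_map_def
  proof (intro conjI allI impI)
    fix x :: "bool list" assume "length x = ncols (purify j L)"
    then have "length x = ncols L" by simp
    then show "length (bxor (f (bxor x (row L j))) (row R j)) = ncols (purify j R)"
      using len[OF lx] by (simp add: ncols_def)
  next
    fix i assume i: "i < N+1"
    have "bxor (bxor (row L i) (row L j)) (row L j) = row L i" by (simp add: xor_xor)
    then show "bxor (f (bxor (row (purify j L) i) (row L j))) (row R j) = row (purify j R) i"
      using row_purify[OF wL i j] row_purify[OF wR i j] rows[OF i] by simp
  next
    fix x x' :: "bool list" assume a: "length x = ncols (purify j L)" "length x' = ncols (purify j L)"
    then have a': "length x = ncols L" "length x' = ncols L" by simp_all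
    have "hamming (bxor (f (bxor x (row L j))) (row R j)) (bxor (f (bxor x' (row L j))) (row R j))
        = hamming (f (bxor x (row L j))) (f (bxor x' (row L j)))"
      using len[OF lx[OF a'(1)]] len[OF lx[OF a'(2)]] by (intro ham_xor) (simp_all add: ncols_def)
    also have "\<dots> \<le> hamming (bxor x (row L j)) (bxor x' (row L j))"
      using ham[OF lx[OF a'(1)] lx[OF a'(2)]] .
    also have "\<dots> = hamming x x'" using a' by (intro ham_xor) (simp_all add: ncols_def)
    finally show "hamming (bxor (f (bxor x (row L j))) (row R j)) (bxor (f (bxor x' (row L j))) (row R j))
        \<le> hamming x x'" .
  qed
qed

lemma sb_ham:
  assumes "superbalanced N L R" "k < N+1" "l < N+1"
  shows "hamming (row L k) (row L l) = hamming (row R k) (row R l)"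
proof -
  have "hamming (row L k) (row L l) + 2 * dot (row L k) (row L l) = dot (row L k) (row L k) + dot (row L l) (row L l)"
    by (intro ham_dot) simp
  moreover have "hamming (row R k) (row R l) + 2 * dot (row R k) (row R l) = dot (row R k) (row R k) + dot (row R l) (row R l)"
    by (intro ham_dot) simp
  ultimately show ?thesis using assms unfolding superbalanced_def by auto
qed

lemma purify_sb:
  assumes sb: "superbalanced N L R" and wL: "wf_mat (N+1) L" and wR: "wf_mat (N+1) R"
    and j: "j < N+1"
  shows "superbalanced N (purify j L) (purify j R)"
  unfolding superbalanced_def
proof (intro allI impI)
  fix k l assume k: "k < N+1" and l: "l < N+1"
  have "2 * dot (bxor (row L k) (row L j)) (bxor (row L l) (row L j)) + hamming (row L k) (row L l)
     = hamming (row L k) (row L j) + hamming (row L l) (row L j)" by (intro dot_xor) simp_all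
  moreover have "2 * dot (bxor (row R k) (row R j)) (bxor (row R l) (row R j)) + hamming (row R k) (row R l)
     = hamming (row R k) (row R j) + hamming (row R l) (row R j)" by (intro dot_xor) simp_all
  ultimately show "dot (row (purify j L) k) (row (purify j L) l) = dot (row (purify j R) k) (row (purify j R) l)"
    using sb_ham[OF sb k l] sb_ham[OF sb k j] sb_ham[OF sb l j]
      row_purify[OF wL k j] row_purify[OF wL l j] row_purify[OF wR k j] row_purify[OF wR l j]
    by simp
qed


lemma main_reduce:
  assumes c: "contraction_map N L R g" and sb: "superbalanced N L R"
    and i: "i < N+1" and j: "j < N+1"
    and zL: "row L j = replicate (length L) False" and zR: "row R j = replicate (length R) False"
  shows "admits_contraction N (null_reduce i L) (null_reduce i R)"
proof -
  have len: "\<And>x. length x = ncols L \<Longrightarrow> length (g x) = ncols R"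
    and rows: "\<And>i. i < N+1 \<Longrightarrow> g (row L i) = row R i"
    and ham: "\<And>x x'. length x = ncols L \<Longrightarrow> length x' = ncols L \<Longrightarrow>
        hamming (g x) (g x') \<le> hamming x x'"
    using c unfolding contraction_map_def by blast+
  define m where "m = row L i"
  define n' where "n' = row R i"
  have key: "g (conj (row L k) m) = conj (row R k) n'" if k: "k < N+1" for k
  proof -
    define a where "a = row L k"
    define z where "z = conj a m"
    define A where "A = row R k"
    have lz: "length z = ncols L" by (simp add: z_def a_def m_def ncols_def)
    have la: "length a = ncols L" "length m = ncols L" "length (row L j) = ncols L"
      by (simp_all add: a_def m_def ncols_def)
    have ly: "length (g z) = length A" "length A = length n'"
      using len[OF lz] by (simp_all add: A_def n'_def ncols_def)
    have h1: "hamming (g z) A \<le> hamming z a"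
      using ham[OF lz la(1)] rows[OF k] by (simp add: a_def A_def)
    have h2: "hamming (g z) n' \<le> hamming z m"
      using ham[OF lz la(2)] rows[OF i] by (simp add: m_def n'_def)
    have "hamming (g z) (g (row L j)) \<le> hamming z (row L j)"
      using ham[OF lz la(3)] .
    then have h3: "dot (g z) (g z) \<le> dot z z"
      using rows[OF j] zL zR ham_zero[of "g z"] ham_zero[of z] len[OF lz] lz
      by (simp add: ncols_def)
    have e1: "hamming z a + dot a m = dot a a" unfolding z_def by (rule ham_conj1) (simp add: la)
    have e2: "hamming z m + dot a m = dot m m" unfolding z_def by (rule ham_conj2) (simp add: la)
    have e3: "dot z z = dot a m" unfolding z_def by (rule dot_conj) (simp add: la)
    have s1: "dot a m = dot A n'" "dot a a = dot A A" "dot m m = dot n' n'"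
      using sb k i unfolding superbalanced_def a_def m_def A_def n'_def by auto
    have e4: "hamming A n' + 2 * dot A n' = dot A A + dot n' n'" by (rule ham_dot) (simp add: ly)
    have "hamming (g z) A + hamming (g z) n' + dot (g z) (g z) \<le> hamming A n' + dot A n'"
      using h1 h2 h3 e1 e2 e3 e4 s1 by linarith
    then have "g z = conj A n'" by (rule median_eq[OF ly])
    then show ?thesis by (simp add: z_def a_def A_def)
  qed
  define h where "h = (\<lambda>y. compress n' (g (ext m y)))"
  have cm: "contraction_map N (null_reduce i L) (null_reduce i R) h"
    unfolding contraction_map_def
  proof (intro conjI allI impI)
    fix y :: "bool list" assume "length y = ncols (null_reduce i L)"
    then have "length (ext m y) = ncols L" by (simp add: m_def ncols_def)
    then show "length (h y) = ncols (null_reduce i R)"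
      using len by (simp add: h_def ncols_null[unfolded ncols_def] n'_def length_compress ncols_def)
  next
    fix k assume k: "k < N+1"
    have "h (row (null_reduce i L) k) = compress n' (g (conj (row L k) m))"
      by (simp add: h_def row_null m_def ext_compress)
    also have "\<dots> = compress n' (row R k)"
      using key[OF k] by (simp add: compress_conj n'_def)
    finally show "h (row (null_reduce i L) k) = row (null_reduce i R) k"
      by (simp add: row_null n'_def)
  next
    fix y y' :: "bool list"
    assume a: "length y = ncols (null_reduce i L)" "length y' = ncols (null_reduce i L)"
    then have a': "length y = length (filter id m)" "length y' = length (filter id m)"
      by (simp_all add: ncols_null m_def)
    have le: "length (ext m y) = ncols L" "length (ext m y') = ncols L" by (simp_all add: m_def ncols_def)
    have "hamming (h y) (h y') \<le> hamming (g (ext m y)) (g (ext m y'))"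
      unfolding h_def using len[OF le(1)] len[OF le(2)]
      by (intro ham_compress) (simp_all add: n'_def ncols_def)
    also have "\<dots> \<le> hamming (ext m y) (ext m y')" using ham[OF le] .
    also have "\<dots> \<le> hamming y y'" using ham_ext[OF a'] .
    finally show "hamming (h y) (h y') \<le> hamming y y'" .
  qed
  then show ?thesis unfolding admits_contraction_def by blast
qed

theorem corollary1:
  fixes N :: nat and L R :: bmat
  assumes "in_P N L R"
    and "superbalanced N L R"
    and "admits_contraction N L R"
    and "i < N + 1" and "j < N + 1"
  shows "admits_contraction N (null_reduce i (purify j L)) (null_reduce i (purify j R))
         \<or> (null_reduce i (purify j L) = [] \<and> null_reduce i (purify j R) = [])"
proof -
  have wL: "wf_mat (N+1) L" and wR: "wf_mat (N+1) R" using assms(1) by (simp_all add: in_P_def)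
  obtain f where f: "contraction_map N L R f" using assms(3) by (auto simp: admits_contraction_def)
  have "admits_contraction N (null_reduce i (purify j L)) (null_reduce i (purify j R))"
    by (rule main_reduce[OF purify_contr[OF f wL wR assms(5)] purify_sb[OF assms(2) wL wR assms(5)]
        assms(4) assms(5)])
      (simp_all add: row_purify_self[OF wL assms(5)] row_purify_self[OF wR assms(5)])
  then show ?thesis by blast
qed

end
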